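(* Let $G$ be a connected graph of order at least two and let $D$ be a minimal certified dominating set of $G$. If $v$ is a vertex with $N_G[v]\subseteq D$, then $v$ is a leaf or a weak support of $G$. Moreover, the induced subgraph $G[\{v\in D\colon N_G[v]\subseteq D\}]$ is a corona (or has no vertices).
   Context: All graphs are finite and simple; $N_G[v]=N_G(v)\cup\{v\}$. A leaf is a vertex of degree one; a support is the neighbor of a leaf; a support is weak if it is adjacent to exactly one leaf and strong if adjacent to at least two leaves. A set $D\subseteq V_G$ is a dominating set of $G$ if every vertex of $V_G-D$ has a neighbor in $D$. A set $D$ is a certified dominating set of $G$ if $D$ is dominating and every vertex of $D$ has either zero or at least two neighbors in $V_G-D$; it is a minimal certified dominating set if no proper subset of $D$ is a certified dominating set. A graph is a corona if it equals $H\circ K_1$ for some graph $H$, i.e., it is obtained from $H$ by attaching one new pendant vertex to each vertex of $H$; equivalently every vertex is a leaf or adjacent to exactly one leaf. *)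

theory Defs
  imports Main
begin

definition simple_graph :: "'a set \<Rightarrow> ('a \<Rightarrow> 'a \<Rightarrow> bool) \<Rightarrow> bool" where
  "simple_graph V E \<longleftrightarrow> finite V \<and> (\<forall>u v. E u v \<longrightarrow> u \<in> V \<and> v \<in> V)
     \<and> (\<forall>u v. E u v \<longrightarrow> E v u) \<and> (\<forall>v. \<not> E v v)"

definition connected_graph :: "'a set \<Rightarrow> ('a \<Rightarrow> 'a \<Rightarrow> bool) \<Rightarrow> bool" where
  "connected_graph V E \<longleftrightarrow> (\<forall>u\<in>V. \<forall>v\<in>V. E\<^sup>*\<^sup>* u v)"

definition nbhd :: "'a set \<Rightarrow> ('a \<Rightarrow> 'a \<Rightarrow> bool) \<Rightarrow> 'a \<Rightarrow> 'a set" where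
  "nbhd V E v = {u \<in> V. E v u}"

definition cnbhd :: "'a set \<Rightarrow> ('a \<Rightarrow> 'a \<Rightarrow> bool) \<Rightarrow> 'a \<Rightarrow> 'a set" where
  "cnbhd V E v = insert v (nbhd V E v)"

definition leaf :: "'a set \<Rightarrow> ('a \<Rightarrow> 'a \<Rightarrow> bool) \<Rightarrow> 'a \<Rightarrow> bool" where
  "leaf V E v \<longleftrightarrow> v \<in> V \<and> card (nbhd V E v) = 1"

definition weak_support :: "'a set \<Rightarrow> ('a \<Rightarrow> 'a \<Rightarrow> bool) \<Rightarrow> 'a \<Rightarrow> bool" where
  "weak_support V E v \<longleftrightarrow> v \<in> V \<and> card {u \<in> nbhd V E v. leaf V E u} = 1"

definition dominating :: "'a set \<Rightarrow> ('a \<Rightarrow> 'a \<Rightarrow> bool) \<Rightarrow> 'a set \<Rightarrow> bool" where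
  "dominating V E D \<longleftrightarrow> D \<subseteq> V \<and> (\<forall>v \<in> V - D. \<exists>u \<in> D. E v u)"

definition certified_dominating :: "'a set \<Rightarrow> ('a \<Rightarrow> 'a \<Rightarrow> bool) \<Rightarrow> 'a set \<Rightarrow> bool" where
  "certified_dominating V E D \<longleftrightarrow> dominating V E D \<and>
     (\<forall>v \<in> D. card (nbhd V E v \<inter> (V - D)) = 0 \<or> card (nbhd V E v \<inter> (V - D)) \<ge> 2)"

definition minimal_certified_dominating :: "'a set \<Rightarrow> ('a \<Rightarrow> 'a \<Rightarrow> bool) \<Rightarrow> 'a set \<Rightarrow> bool" where
  "minimal_certified_dominating V E D \<longleftrightarrow> certified_dominating V E D \<and>
     (\<forall>D'. D' \<subset> D \<longrightarrow> \<not> certified_dominating V E D')"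

text \<open>The induced subgraph G[S] is represented by (S, E) since nbhd restricts to S.
  corona S E: G[S] = H \<circ> K1 for some graph H, i.e. S splits into H and the pendant
  vertices S - H, paired bijectively by f, where f h is adjacent (in G[S]) only to h.\<close>
definition corona :: "'a set \<Rightarrow> ('a \<Rightarrow> 'a \<Rightarrow> bool) \<Rightarrow> bool" where
  "corona S E \<longleftrightarrow> (\<exists>H f. H \<subseteq> S \<and> bij_betw f H (S - H) \<and> (\<forall>h \<in> H. nbhd S E (f h) = {h}))"

end

theory Submission
  imports Defs
begin

locale mcd =
  fixes V :: "'a set" and E :: "'a \<Rightarrow> 'a \<Rightarrow> bool" and D :: "'a set"
  assumes sg: "simple_graph V E" and conn: "connected_graph V E" and card2: "card V \<ge> 2"
    and mcd: "minimal_certified_dominating V E D"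
begin

definition SS where "SS = {v \<in> D. cnbhd V E v \<subseteq> D}"

lemma finV: "finite V" using sg by (simp add: simple_graph_def)
lemma Eval: "E u v \<Longrightarrow> u \<in> V \<and> v \<in> V" using sg by (simp add: simple_graph_def)
lemma Esym: "E u v \<Longrightarrow> E v u" using sg by (simp add: simple_graph_def)
lemma Eirr: "\<not> E v v" using sg by (simp add: simple_graph_def)
lemma nb_iff: "u \<in> nbhd V E v \<longleftrightarrow> E v u" using Eval by (auto simp: nbhd_def)
lemma fin_nb: "finite (nbhd V E v)" using finV by (simp add: nbhd_def)
lemma cert: "certified_dominating V E D" using mcd by (simp add: minimal_certified_dominating_def)
lemma DV: "D \<subseteq> V" using cert by (simp add: certified_dominating_def dominating_def)

lemma SS_iff: "v \<in> SS \<longleftrightarrow> v \<in> D \<and> (\<forall>u. E v u \<longrightarrow> u \<in> D)"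
  unfolding SS_def cnbhd_def using nb_iff by auto

lemma SS_V: "v \<in> SS \<Longrightarrow> v \<in> V" using SS_iff DV by auto

lemma leaf_nb: assumes "leaf V E l" "E l p" shows "nbhd V E l = {p}"
proof -
  from assms(1) have "card (nbhd V E l) = 1" by (simp add: leaf_def)
  then obtain a where a: "nbhd V E l = {a}" by (rule card_1_singletonE)
  from assms(2) have "p \<in> nbhd V E l" by (simp add: nb_iff)
  with a show ?thesis by simp
qed

lemma leaf_uniq: "leaf V E l \<Longrightarrow> E l p \<Longrightarrow> E l q \<Longrightarrow> p = q"
  using leaf_nb nb_iff by (metis singletonD)

lemma deg1: assumes "v \<in> V" shows "\<exists>u. E v u"
proof -
  have "\<exists>u\<in>V. u \<noteq> v"
  proof (rule ccontr)
    assume "\<not> ?thesis"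
    then have "V \<subseteq> {v}" by auto
    then have "card V \<le> 1" using card_mono[of "{v}" V] by auto
    with card2 show False by simp
  qed
  then obtain u where u: "u \<in> V" "u \<noteq> v" by blast
  with conn assms have "E\<^sup>*\<^sup>* v u" by (simp add: connected_graph_def)
  then show ?thesis using u(2) by (cases rule: converse_rtranclpE) auto
qed

lemma deg_pos: "v \<in> V \<Longrightarrow> card (nbhd V E v) \<ge> 1"
  using deg1[of v] fin_nb[of v] nb_iff
  by (metis One_nat_def Suc_leI card_gt_0_iff empty_iff)

lemma key:
  assumes XS: "X \<subseteq> SS" and Xne: "X \<noteq> {}"
    and a: "\<forall>x\<in>X. \<exists>y. E x y \<and> y \<notin> X"
    and b: "\<forall>w\<in>SS - X. card (nbhd V E w \<inter> X) \<noteq> 1"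
  shows False
proof -
  have XD: "X \<subseteq> D" using XS SS_iff by auto
  have sub: "D - X \<subset> D" using XD Xne by blast
  have "certified_dominating V E (D - X)"
    unfolding certified_dominating_def dominating_def
  proof (intro conjI ballI)
    show "D - X \<subseteq> V" using DV by blast
  next
    fix v assume v: "v \<in> V - (D - X)"
    show "\<exists>u\<in>D - X. E v u"
    proof (cases "v \<in> D")
      case True
      then have "v \<in> X" using v by blast
      then obtain y where y: "E v y" "y \<notin> X" using a by blast
      have "y \<in> D" using \<open>v \<in> X\<close> XS y(1) SS_iff by blast
      with y show ?thesis by blast
    next
      case False
      have "\<exists>u\<in>D. E v u" using v False cert
        unfolding certified_dominating_def dominating_def by blast
      then obtain u where u: "u \<in> D" "E v u" by blast
      have "u \<notin> X"
      proof
        assume "u \<in> X"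
        then have "u \<in> SS" using XS by blast
        with Esym[OF u(2)] have "v \<in> D" using SS_iff by blast
        with False show False by simp
      qed
      with u show ?thesis by blast
    qed
  next
    fix v assume v: "v \<in> D - X"
    show "card (nbhd V E v \<inter> (V - (D - X))) = 0 \<or> 2 \<le> card (nbhd V E v \<inter> (V - (D - X)))"
    proof (cases "v \<in> SS")
      case True
      have "nbhd V E v \<inter> (V - (D - X)) = nbhd V E v \<inter> X"
        using True SS_iff nb_iff XD DV by blast
      moreover have "card (nbhd V E v \<inter> X) \<noteq> 1" using b True v by blast
      then have "card (nbhd V E v \<inter> X) = 0 \<or> 2 \<le> card (nbhd V E v \<inter> X)" by linarith
      ultimately show ?thesis by simp
    next
      case False
      with v SS_iff obtain u where u: "E v u" "u \<notin> D" by blast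
      have uin: "u \<in> nbhd V E v \<inter> (V - D)" using u nb_iff Eval by blast
      have fin1: "finite (nbhd V E v \<inter> (V - D))" using fin_nb by blast
      have "card (nbhd V E v \<inter> (V - D)) \<noteq> 0" using uin fin1 by auto
      then have c2: "card (nbhd V E v \<inter> (V - D)) \<ge> 2"
        using cert v by (auto simp: certified_dominating_def)
      have "card (nbhd V E v \<inter> (V - D)) \<le> card (nbhd V E v \<inter> (V - (D - X)))"
        by (rule card_mono) (use fin_nb in auto)
      with c2 show ?thesis by linarith
    qed
  qed
  with sub mcd show False by (auto simp: minimal_certified_dominating_def)
qed

lemma leaf_in_SS: assumes "v \<in> SS" "E v l" "leaf V E l" shows "l \<in> SS"
proof -
  have vD: "v \<in> D" using assms(1) by (simp add: SS_iff)
  have lD: "l \<in> D" using assms(1,2) by (simp add: SS_iff)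
  have "\<forall>u. E l u \<longrightarrow> u = v" using leaf_uniq[OF assms(3) Esym[OF assms(2)]] by blast
  with lD vD show ?thesis unfolding SS_iff by metis
qed

lemma S_has_nbr: assumes "v \<in> SS" shows "\<exists>w\<in>SS. E v w"
proof (rule ccontr)
  assume nn: "\<not> ?thesis"
  show False
  proof (rule key[of "{v}"])
    show "{v} \<subseteq> SS" using assms by simp
    show "{v} \<noteq> {}" by simp
    show "\<forall>x\<in>{v}. \<exists>y. E x y \<and> y \<notin> {v}" using deg1[OF SS_V[OF assms]] Eirr by auto
    show "\<forall>w\<in>SS - {v}. card (nbhd V E w \<inter> {v}) \<noteq> 1"
    proof
      fix w assume w: "w \<in> SS - {v}"
      then have "\<not> E w v" using nn Esym by blast
      then have "nbhd V E w \<inter> {v} = {}" using nb_iff by blast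
      then show "card (nbhd V E w \<inter> {v}) \<noteq> 1" by simp
    qed
  qed
qed

lemma two_leaves:
  assumes v: "v \<in> SS" and l: "E v l1" "E v l2" "l1 \<noteq> l2" "leaf V E l1" "leaf V E l2"
  shows False
proof (rule key[of "{l1, l2}"])
  show "{l1, l2} \<subseteq> SS" using leaf_in_SS[OF v l(1) l(4)] leaf_in_SS[OF v l(2) l(5)] by simp
  show "{l1, l2} \<noteq> {}" by simp
  have vl: "v \<noteq> l1" "v \<noteq> l2" using l Eirr by auto
  show "\<forall>x\<in>{l1, l2}. \<exists>y. E x y \<and> y \<notin> {l1, l2}"
    using vl Esym[OF l(1)] Esym[OF l(2)] by auto
  show "\<forall>w\<in>SS - {l1, l2}. card (nbhd V E w \<inter> {l1, l2}) \<noteq> 1"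
  proof
    fix w assume w: "w \<in> SS - {l1, l2}"
    show "card (nbhd V E w \<inter> {l1, l2}) \<noteq> 1"
    proof (cases "w = v")
      case True
      then have "nbhd V E w \<inter> {l1, l2} = {l1, l2}" using l nb_iff by blast
      then show ?thesis using l(3) by simp
    next
      case False
      have "\<not> E w l1" using leaf_uniq[OF l(4) Esym[OF l(1)]] Esym False by metis
      moreover have "\<not> E w l2" using leaf_uniq[OF l(5) Esym[OF l(2)]] Esym False by metis
      ultimately have "nbhd V E w \<inter> {l1, l2} = {}" using nb_iff by blast
      then show ?thesis by simp
    qed
  qed
qed

lemma leaf_card: "leaf V E l \<Longrightarrow> card (nbhd V E l) = 1" by (simp add: leaf_def)

lemma bad_R:
  assumes v: "v \<in> SS" and dv: "card (nbhd V E v) \<ge> 2" and nl: "\<forall>u. E v u \<longrightarrow> \<not> leaf V E u"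
  shows False
proof -
  define R where "R = {s \<in> SS. card (nbhd V E s) \<ge> 2 \<and> (\<forall>u. E s u \<longrightarrow> \<not> leaf V E u)}"
  define U where "U = {r \<in> R. \<forall>u. E r u \<longrightarrow> u \<in> R}"
  define F where "F = {Y. Y \<subseteq> U \<and> (\<forall>a\<in>Y. \<forall>b\<in>Y. \<not> E a b)}"
  have RS: "R \<subseteq> SS" unfolding R_def by blast
  have "U \<subseteq> V" using RS SS_V unfolding U_def by blast
  then have finU: "finite U" using finV finite_subset by blast
  have "finite F" unfolding F_def using finU by (simp add: finite_Collect_subsets)
  moreover have "{} \<in> F" unfolding F_def by simp
  ultimately obtain Y where YF: "Y \<in> F" and Ymax: "\<forall>b\<in>F. Y \<subseteq> b \<longrightarrow> Y = b"
    using finite_has_maximal[of F] by blast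
  have YU: "Y \<subseteq> U" and Yind: "\<forall>a\<in>Y. \<forall>b\<in>Y. \<not> E a b" using YF unfolding F_def by auto
  have YR: "Y \<subseteq> R" using YU unfolding U_def by blast
  define R' where "R' = R - Y"
  define L2 where "L2 = {l \<in> SS. leaf V E l \<and> (\<exists>p. E l p \<and> (\<exists>r\<in>R'. E p r))}"
  define X where "X = R' \<union> L2"
  have leafR: "\<And>l. leaf V E l \<Longrightarrow> l \<notin> R" unfolding R_def using leaf_card by fastforce
  have Rnl: "\<And>r u. r \<in> R \<Longrightarrow> E r u \<Longrightarrow> \<not> leaf V E u" unfolding R_def by blast
  have Rdeg: "\<And>r. r \<in> R \<Longrightarrow> card (nbhd V E r) \<ge> 2" unfolding R_def by blast
  have vR: "v \<in> R" unfolding R_def using v dv nl by blast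
  show False
  proof (rule key[of X])
    show "X \<subseteq> SS" unfolding X_def R'_def L2_def using RS by blast
    show "X \<noteq> {}"
    proof (cases "v \<in> Y")
      case False
      then show ?thesis unfolding X_def R'_def using vR by blast
    next
      case True
      have "nbhd V E v \<noteq> {}" using dv by auto
      then obtain u where u: "E v u" using nb_iff by blast
      have "u \<in> R" using True YU u unfolding U_def by blast
      moreover have "u \<notin> Y" using True Yind u by blast
      ultimately show ?thesis unfolding X_def R'_def by blast
    qed
    show "\<forall>x\<in>X. \<exists>y. E x y \<and> y \<notin> X"
    proof
      fix x assume x: "x \<in> X"
      show "\<exists>y. E x y \<and> y \<notin> X"
      proof (cases "x \<in> R'")
        case True
        then have xR: "x \<in> R" and xY: "x \<notin> Y" unfolding R'_def by auto
        show ?thesis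
        proof (cases "x \<in> U")
          case True
          have "insert x Y \<notin> F"
          proof
            assume "insert x Y \<in> F"
            with Ymax have "Y = insert x Y" by blast
            with xY show False by blast
          qed
          moreover have "insert x Y \<subseteq> U" using True YU by blast
          ultimately have "\<not> (\<forall>a\<in>insert x Y. \<forall>b\<in>insert x Y. \<not> E a b)"
            unfolding F_def by blast
          then obtain a b where ab: "a \<in> insert x Y" "b \<in> insert x Y" "E a b" by blast
          have "\<exists>y\<in>Y. E x y"
          proof (cases "a = x")
            case True
            then show ?thesis using ab Eirr by (metis insertE)
          next
            case False
            then have "a \<in> Y" using ab by blast
            then have "b = x" using ab Yind by blast
            then show ?thesis using ab \<open>a \<in> Y\<close> Esym by blast
          qed
          then obtain y where y: "y \<in> Y" and Exy: "E x y" by blast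
          have "y \<in> R" using y YR by blast
          then have "y \<notin> L2" unfolding L2_def using leafR by blast
          moreover have "y \<notin> R'" using y unfolding R'_def by blast
          ultimately show ?thesis using Exy unfolding X_def by blast
        next
          case False
          then obtain u where u: "E x u" "u \<notin> R" using xR unfolding U_def by blast
          have "\<not> leaf V E u" using Rnl[OF xR u(1)] .
          then have "u \<notin> L2" unfolding L2_def by blast
          moreover have "u \<notin> R'" using u unfolding R'_def by blast
          ultimately show ?thesis using u unfolding X_def by blast
        qed
      next
        case False
        then have xL: "x \<in> L2" using x unfolding X_def by blast
        then obtain p r where xl: "leaf V E x" and p: "E x p" and r: "r \<in> R'" "E p r"
          unfolding L2_def by blast
        have rR: "r \<in> R" using r unfolding R'_def by blast
        have "p \<notin> R" using Rnl[of p x] Esym[OF p] xl by blast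
        then have "p \<notin> R'" unfolding R'_def by blast
        moreover have "p \<notin> L2"
        proof
          assume "p \<in> L2"
          then have pl: "leaf V E p" unfolding L2_def by blast
          have "x = r" using leaf_uniq[OF pl Esym[OF p] r(2)] .
          with xl rR leafR show False by blast
        qed
        ultimately show ?thesis using p unfolding X_def by blast
      qed
    qed
    show "\<forall>w\<in>SS - X. card (nbhd V E w \<inter> X) \<noteq> 1"
    proof
      fix w assume w: "w \<in> SS - X"
      have wV: "w \<in> V" using w SS_V by blast
      have fw: "finite (nbhd V E w \<inter> X)" using fin_nb by blast
      show "card (nbhd V E w \<inter> X) \<noteq> 1"
      proof (cases "w \<in> Y")
        case True
        have "nbhd V E w \<subseteq> X"
        proof
          fix u assume "u \<in> nbhd V E w"
          then have u: "E w u" using nb_iff by blast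
          have "u \<in> R" using True YU u unfolding U_def by blast
          moreover have "u \<notin> Y" using True Yind u by blast
          ultimately show "u \<in> X" unfolding X_def R'_def by blast
        qed
        then have "nbhd V E w \<inter> X = nbhd V E w" by blast
        moreover have "card (nbhd V E w) \<ge> 2" using True YR Rdeg by blast
        ultimately show ?thesis by simp
      next
        case False
        have wR: "w \<notin> R" using w False unfolding X_def R'_def by blast
        show ?thesis
        proof (cases "leaf V E w")
          case True
          have "nbhd V E w \<inter> X = {}"
          proof (rule ccontr)
            assume "nbhd V E w \<inter> X \<noteq> {}"
            then obtain z where zX: "z \<in> X" and wz: "E w z" using nb_iff by blast
            show False
            proof (cases "z \<in> R'")
              case True
              then have "z \<in> R" unfolding R'_def by blast
              with Rnl[OF this Esym[OF wz]] True \<open>leaf V E w\<close> show False by blast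
            next
              case False
              then have "z \<in> L2" using zX unfolding X_def by blast
              then obtain q r where zl: "leaf V E z" and q: "E z q" and r: "r \<in> R'" "E q r"
                unfolding L2_def by blast
              have "q = w" using leaf_uniq[OF zl q Esym[OF wz]] .
              have "r \<in> R" using r unfolding R'_def by blast
              with Rnl[OF this] Esym r(2) \<open>q = w\<close> \<open>leaf V E w\<close> show False by blast
            qed
          qed
          then show ?thesis by simp
        next
          case False
          have "card (nbhd V E w) \<noteq> 1" using False wV unfolding leaf_def by blast
          moreover have "card (nbhd V E w) \<ge> 1" using deg_pos[OF wV] .
          ultimately have dw: "card (nbhd V E w) \<ge> 2" by linarith
          then obtain l0 where l0: "E w l0" "leaf V E l0"
            using wR w unfolding R_def by blast
          show ?thesis
          proof (cases "\<exists>r\<in>R'. E w r")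
            case True
            then obtain r where r: "r \<in> R'" "E w r" by blast
            have "l0 \<in> SS" using leaf_in_SS w l0 by blast
            then have "l0 \<in> L2" unfolding L2_def using l0 Esym[OF l0(1)] r by blast
            have "r \<in> R" using r unfolding R'_def by blast
            then have "r \<noteq> l0" using leafR l0 by blast
            have "l0 \<in> nbhd V E w" "r \<in> nbhd V E w" using l0(1) r(2) by (simp_all add: nb_iff)
            then have "{l0, r} \<subseteq> nbhd V E w \<inter> X"
              using \<open>l0 \<in> L2\<close> r(1) unfolding X_def by blast
            then have "card {l0, r} \<le> card (nbhd V E w \<inter> X)" using fw card_mono by blast
            with \<open>r \<noteq> l0\<close> show ?thesis by simp
          next
            case False
            have "nbhd V E w \<inter> X = {}"
            proof (rule ccontr)
              assume "nbhd V E w \<inter> X \<noteq> {}"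
              then obtain z where zX: "z \<in> X" and wz: "E w z" using nb_iff by blast
              have "z \<notin> R'" using False wz by blast
              then have "z \<in> L2" using zX unfolding X_def by blast
              then obtain q r where zl: "leaf V E z" and q: "E z q" and r: "r \<in> R'" "E q r"
                unfolding L2_def by blast
              have "q = w" using leaf_uniq[OF zl q Esym[OF wz]] .
              with r False show False by blast
            qed
            then show ?thesis by simp
          qed
        qed
      qed
    qed
  qed
qed

lemma goal1: assumes vV: "v \<in> V" and sub: "cnbhd V E v \<subseteq> D"
  shows "leaf V E v \<or> weak_support V E v"
proof (cases "leaf V E v")
  case True then show ?thesis by simp
next
  case False
  have vS: "v \<in> SS" using sub unfolding SS_def cnbhd_def by blast
  have "card (nbhd V E v) \<noteq> 1" using False vV unfolding leaf_def by blast
  with deg_pos[OF vV] have dv: "card (nbhd V E v) \<ge> 2" by linarith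
  define Lv where "Lv = {u \<in> nbhd V E v. leaf V E u}"
  have finL: "finite Lv" unfolding Lv_def using fin_nb by simp
  consider "card Lv = 0" | "card Lv = 1" | "card Lv \<ge> 2" by linarith
  then show ?thesis
  proof cases
    case 1
    then have "Lv = {}" using finL by simp
    then have "\<forall>u. E v u \<longrightarrow> \<not> leaf V E u" unfolding Lv_def using nb_iff by blast
    with bad_R[OF vS dv] show ?thesis by blast
  next
    case 2
    then show ?thesis using vV unfolding weak_support_def Lv_def by blast
  next
    case 3
    then have "Lv \<noteq> {}" by auto
    then obtain x where x: "x \<in> Lv" by blast
    have "card (Lv - {x}) = card Lv - 1" using x finL by simp
    with 3 have "card (Lv - {x}) \<noteq> 0" by linarith
    then have "Lv - {x} \<noteq> {}" by (metis card.empty)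
    then obtain y where y: "y \<in> Lv" "y \<noteq> x" by blast
    have "E v x" "leaf V E x" "E v y" "leaf V E y" using x y unfolding Lv_def by (simp_all add: nb_iff)
    with two_leaves[OF vS _ _ y(2)[symmetric]] show ?thesis by blast
  qed
qed

lemma uniq_leaf: assumes h: "h \<in> SS" and nl: "\<not> leaf V E h"
  shows "\<exists>!l. E h l \<and> leaf V E l"
proof -
  have hV: "h \<in> V" using SS_V h .
  have "cnbhd V E h \<subseteq> D" using h unfolding SS_def by blast
  with goal1[OF hV] nl have "weak_support V E h" by blast
  then have "card {u \<in> nbhd V E h. leaf V E u} = 1" unfolding weak_support_def by blast
  then obtain l where l: "{u \<in> nbhd V E h. leaf V E u} = {l}" by (rule card_1_singletonE)
  have "\<And>u. (E h u \<and> leaf V E u) \<longleftrightarrow> u = l"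
  proof -
    fix u
    have "(E h u \<and> leaf V E u) \<longleftrightarrow> u \<in> {u \<in> nbhd V E h. leaf V E u}" by (simp add: nb_iff)
    then show "(E h u \<and> leaf V E u) \<longleftrightarrow> u = l" using l by simp
  qed
  then show ?thesis by (metis (no_types, lifting))
qed

lemma nbhdS: "nbhd SS E x = nbhd V E x \<inter> SS" unfolding nbhd_def using SS_V by blast

lemma goal2: assumes ne: "SS \<noteq> {}" shows "corona SS E"
proof (cases "\<exists>a\<in>SS. leaf V E a \<and> (\<exists>b. E a b \<and> leaf V E b)")
  case True
  then obtain a b where a: "a \<in> SS" "leaf V E a" and b: "E a b" "leaf V E b" by blast
  have bS: "b \<in> SS" using leaf_in_SS[OF a(1) b(1) b(2)] .
  have ab: "a \<noteq> b" using b(1) Eirr by blast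
  have reach: "E\<^sup>*\<^sup>* a c \<Longrightarrow> c \<in> {a, b}" for c
  proof (induction rule: rtranclp_induct)
    case base then show ?case by simp
  next
    case (step y z)
    then show ?case
    proof (cases "y = a")
      case True
      then show ?thesis using leaf_uniq[OF a(2) b(1)] step(2) by auto
    next
      case False
      then have "y = b" using step(3) by simp
      then show ?thesis using leaf_uniq[OF b(2) Esym[OF b(1)]] step(2) by auto
    qed
  qed
  have "SS \<subseteq> {a, b}"
  proof
    fix c assume "c \<in> SS"
    then have "c \<in> V" using SS_V by blast
    moreover have "a \<in> V" using SS_V a(1) by blast
    ultimately have "E\<^sup>*\<^sup>* a c" using conn unfolding connected_graph_def by blast
    then show "c \<in> {a, b}" using reach by blast
  qed
  then have SSeq: "SS = {a, b}" using a(1) bS by blast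
  show ?thesis unfolding corona_def
  proof (intro exI conjI)
    show "{a} \<subseteq> SS" using a(1) by simp
    show "bij_betw (\<lambda>_. b) {a} (SS - {a})" using SSeq ab by (simp add: bij_betw_def)
    have "nbhd V E b = {a}" using leaf_nb[OF b(2) Esym[OF b(1)]] .
    then show "\<forall>h\<in>{a}. nbhd SS E b = {h}" using nbhdS a(1) by auto
  qed
next
  case False
  define H where "H = {s \<in> SS. \<not> leaf V E s}"
  define f where "f h = (SOME l. E h l \<and> leaf V E l)" for h
  have fprop: "E h (f h) \<and> leaf V E (f h)" if "h \<in> H" for h
  proof -
    have "\<exists>l. E h l \<and> leaf V E l" using uniq_leaf that unfolding H_def by blast
    then show ?thesis unfolding f_def by (rule someI_ex)
  qed
  have funiq: "l = f h" if "h \<in> H" "E h l" "leaf V E l" for h l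
    using uniq_leaf[of h] that fprop[OF that(1)] unfolding H_def by blast
  show ?thesis unfolding corona_def
  proof (intro exI conjI)
    show "H \<subseteq> SS" unfolding H_def by blast
    show "bij_betw f H (SS - H)"
      unfolding bij_betw_def
    proof
      show "inj_on f H"
      proof (rule inj_onI)
        fix x y assume xy: "x \<in> H" "y \<in> H" "f x = f y"
        have "E (f x) x" using fprop[OF xy(1)] Esym by blast
        moreover have "E (f x) y" using fprop[OF xy(2)] Esym xy(3) by metis
        ultimately show "x = y" using leaf_uniq fprop[OF xy(1)] by blast
      qed
      show "f ` H = SS - H"
      proof
        show "f ` H \<subseteq> SS - H"
        proof
          fix l assume "l \<in> f ` H"
          then obtain h where h: "h \<in> H" "l = f h" by blast
          have "h \<in> SS" using h unfolding H_def by blast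
          then have "l \<in> SS" using leaf_in_SS fprop[OF h(1)] h(2) by blast
          moreover have "l \<notin> H" using fprop[OF h(1)] h(2) unfolding H_def by blast
          ultimately show "l \<in> SS - H" by blast
        qed
      next
        show "SS - H \<subseteq> f ` H"
        proof
          fix l assume l: "l \<in> SS - H"
          then have ll: "leaf V E l" and lS: "l \<in> SS" unfolding H_def by auto
          obtain p where p: "p \<in> SS" "E l p" using S_has_nbr[OF lS] by blast
          have "\<not> leaf V E p" using False lS ll p by blast
          then have pH: "p \<in> H" using p unfolding H_def by blast
          have "l = f p" using funiq[OF pH Esym[OF p(2)] ll] .
          with pH show "l \<in> f ` H" by blast
        qed
      qed
    qed
    show "\<forall>h\<in>H. nbhd SS E (f h) = {h}"
    proof
      fix h assume h: "h \<in> H"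
      have "nbhd V E (f h) = {h}" using leaf_nb fprop[OF h] Esym by blast
      moreover have "h \<in> SS" using h unfolding H_def by blast
      ultimately show "nbhd SS E (f h) = {h}" using nbhdS by auto
    qed
  qed
qed

end

theorem lemma3p1:
  fixes V :: "'a set" and E :: "'a \<Rightarrow> 'a \<Rightarrow> bool" and D :: "'a set"
  assumes "simple_graph V E" and "connected_graph V E" and "card V \<ge> 2"
    and "minimal_certified_dominating V E D"
  shows "(\<forall>v \<in> V. cnbhd V E v \<subseteq> D \<longrightarrow> leaf V E v \<or> weak_support V E v)
    \<and> (let S = {v \<in> D. cnbhd V E v \<subseteq> D} in S = {} \<or> corona S E)"
proof -
  interpret m: mcd V E D using assms by (unfold_locales)
  have 1: "\<forall>v \<in> V. cnbhd V E v \<subseteq> D \<longrightarrow> leaf V E v \<or> weak_support V E v"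
    using m.goal1 by blast
  have 2: "m.SS = {} \<or> corona m.SS E" using m.goal2 by blast
  show ?thesis using 1 2 unfolding Let_def m.SS_def by blast
qed

end
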